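(* Let $p$ be an odd prime and $m$ a positive integer not divisible by $p$. Then $$\sum_{r=1}^m rK_p(r,m)\equiv-q_p(m)\pmod p,$$ where $K_p(r,m)=\sum_{1\le k\le p-1,\ m\mid k-rp}\frac1k$ and $q_p(m)=(m^{p-1}-1)/p$ is the Fermat quotient.
   Context: Congruences modulo $p$ are between rational numbers whose denominators are prime to $p$. *)

theory Defs
  imports "HOL-Number_Theory.Number_Theory"
begin

definition p_integral :: "int \<Rightarrow> rat \<Rightarrow> bool" where
  "p_integral p x = (\<not> p dvd snd (quotient_of x))"

definition rat_cong :: "rat \<Rightarrow> rat \<Rightarrow> int \<Rightarrow> bool" where
  "rat_cong a b p = (p_integral p a \<and> p_integral p b \<and>
     (\<exists>u. p_integral p u \<and> a - b = of_int p * u))"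

definition K :: "nat \<Rightarrow> nat \<Rightarrow> nat \<Rightarrow> rat" where
  "K p r m = (\<Sum>k\<in>{k. 1 \<le> k \<and> k \<le> p - 1 \<and> (int m) dvd (int k - int r * int p)}. 1 / of_nat k)"

definition fermat_quotient :: "nat \<Rightarrow> nat \<Rightarrow> rat" where
  "fermat_quotient p m = (of_nat m ^ (p - 1) - 1) / of_nat p"

end

theory Submission
  imports Defs
begin

lemma pint_iff:
  assumes P: "prime (P::int)"
  shows "p_integral P x \<longleftrightarrow> (\<exists>a b. b \<noteq> 0 \<and> \<not> P dvd b \<and> x = of_int a / of_int b)"
proof
  assume h: "p_integral P x"
  obtain a b where q: "quotient_of x = (a,b)" by (cases "quotient_of x")
  have 1: "b \<noteq> 0" using quotient_of_denom_pos[OF q] by linarith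
  have 2: "x = of_int a / of_int b" using quotient_of_div[OF q] .
  have 3: "\<not> P dvd b" using h q by (simp add: p_integral_def)
  show "\<exists>a b. b \<noteq> 0 \<and> \<not> P dvd b \<and> x = of_int a / of_int b"
    using 1 2 3 by blast
next
  assume "\<exists>a b. b \<noteq> 0 \<and> \<not> P dvd b \<and> x = of_int a / of_int b"
  then obtain a b where ab: "b \<noteq> 0" "\<not> P dvd b" "x = of_int a / of_int b" by blast
  obtain a' b' where q: "quotient_of x = (a',b')" by (cases "quotient_of x")
  have b'0: "b' > 0" using quotient_of_denom_pos[OF q] .
  have x': "x = of_int a' / of_int b'" using quotient_of_div[OF q] .
  have cop: "coprime a' b'" using quotient_of_coprime[OF q] .
  have eq: "a * b' = a' * b"
  proof -
    have h: "(of_int a / of_int b :: rat) = of_int a' / of_int b'" using ab(3) x' by metis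
    have "(of_int a * of_int b' :: rat) = of_int a' * of_int b"
      using frac_eq_eq[of "of_int b :: rat" "of_int b'" "of_int a" "of_int a'"] h ab(1) b'0 by simp
    then have "(of_int (a * b') :: rat) = of_int (a' * b)" by (simp only: of_int_mult)
    then show ?thesis by (simp only: of_int_eq_iff)
  qed
  show "p_integral P x"
  proof (rule ccontr)
    assume "\<not> p_integral P x"
    then have "P dvd b'" using q by (simp add: p_integral_def)
    then have "P dvd a * b'" by (rule dvd_mult)
    then have "P dvd a' * b" unfolding eq .
    then have "P dvd a'" using ab(2) prime_dvd_mult_iff[OF P] by blast
    then have "is_unit P" using coprime_common_divisor[OF cop _ \<open>P dvd b'\<close>] by blast
    then show False using P not_prime_unit by blast
  qed
qed

lemma pint_frac: "prime (P::int) \<Longrightarrow> b \<noteq> 0 \<Longrightarrow> \<not> P dvd b \<Longrightarrow> p_integral P (of_int a / of_int b)"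
  using pint_iff by blast

lemma pint_int: "prime (P::int) \<Longrightarrow> p_integral P (of_int a)"
proof -
  assume P: "prime P"
  have h: "\<not> P dvd 1" using P not_prime_unit by blast
  have "p_integral P (of_int a / of_int 1)" by (rule pint_frac[OF P _ h]) simp
  then show ?thesis by simp
qed

lemma pint_nat: "prime (P::int) \<Longrightarrow> p_integral P (of_nat a)"
proof -
  assume P: "prime P"
  have "p_integral P (of_int (int a))" by (rule pint_int[OF P])
  then show ?thesis by simp
qed

lemma pint_add: assumes P: "prime (P::int)" and "p_integral P x" "p_integral P y"
  shows "p_integral P (x + y)"
proof -
  obtain a b where 1: "b \<noteq> 0" "\<not> P dvd b" "x = of_int a / of_int b" using assms pint_iff by blast
  obtain c d where 2: "d \<noteq> 0" "\<not> P dvd d" "y = of_int c / of_int d" using assms pint_iff by blast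
  have "x + y = (of_int a * of_int d + of_int c * of_int b) / (of_int b * of_int d)"
    unfolding 1(3) 2(3) by (rule add_frac_eq) (use 1 2 in simp_all)
  then have e: "x + y = of_int (a*d + c*b) / of_int (b*d)" by (simp only: of_int_add of_int_mult)
  have nd: "\<not> P dvd b*d" using 1 2 P by (simp add: prime_dvd_mult_iff)
  have "p_integral P (of_int (a*d + c*b) / of_int (b*d))" by (rule pint_frac[OF P]) (use 1 2 nd in simp_all)
  then show ?thesis by (simp only: e)
qed

lemma pint_mult: assumes P: "prime (P::int)" and "p_integral P x" "p_integral P y"
  shows "p_integral P (x * y)"
proof -
  obtain a b where 1: "b \<noteq> 0" "\<not> P dvd b" "x = of_int a / of_int b" using assms pint_iff by blast
  obtain c d where 2: "d \<noteq> 0" "\<not> P dvd d" "y = of_int c / of_int d" using assms pint_iff by blast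
  have "x * y = (of_int a * of_int c) / (of_int b * of_int d)"
    unfolding 1(3) 2(3) by (rule times_divide_times_eq)
  then have e: "x * y = of_int (a*c) / of_int (b*d)" by (simp only: of_int_mult)
  have nd: "\<not> P dvd b*d" using 1 2 P by (simp add: prime_dvd_mult_iff)
  have "p_integral P (of_int (a*c) / of_int (b*d))" by (rule pint_frac[OF P]) (use 1 2 nd in simp_all)
  then show ?thesis by (simp only: e)
qed

lemma pint_neg: assumes P: "prime (P::int)" and "p_integral P x" shows "p_integral P (- x)"
proof -
  have "p_integral P (of_int (-1) * x)" by (rule pint_mult[OF P pint_int[OF P] assms(2)])
  then show ?thesis by simp
qed

lemma pint_diff: assumes P: "prime (P::int)" and "p_integral P x" "p_integral P y"
  shows "p_integral P (x - y)"
proof -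
  have "p_integral P (x + - y)" by (rule pint_add[OF P assms(2) pint_neg[OF P assms(3)]])
  then show ?thesis by simp
qed

lemma pint_zero: "prime (P::int) \<Longrightarrow> p_integral P 0"
  using pint_int[of P 0] by (simp only: of_int_0)

lemma pint_sum: assumes P: "prime (P::int)" shows "(\<And>j. j \<in> A \<Longrightarrow> p_integral P (f j)) \<Longrightarrow> p_integral P (sum f A)"
proof (induction A rule: infinite_finite_induct)
  case (infinite A)
  have "sum f A = 0" using \<open>infinite A\<close> by (rule sum.infinite)
  then show ?case using pint_zero[OF P] by (simp only:)
next
  case empty then show ?case using pint_zero[OF P] by (simp only: sum.empty)
next
  case (insert x F)
  have "p_integral P (f x + sum f F)" using insert by (intro pint_add[OF P]) auto
  moreover have "sum f (insert x F) = f x + sum f F" using insert.hyps by (rule sum.insert)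
  ultimately show ?case by (simp only:)
qed

lemma pint_inv_nat: "prime (P::int) \<Longrightarrow> \<not> P dvd int n \<Longrightarrow> p_integral P (1 / of_nat n)"
proof -
  assume P: "prime P" and n: "\<not> P dvd int n"
  have "n \<noteq> 0"
  proof
    assume "n = 0" then show False using n by simp
  qed
  then have "p_integral P (of_int 1 / of_int (int n))" using n by (intro pint_frac[OF P]) auto
  then show ?thesis by simp
qed

lemma prod_expand:
  assumes P: "prime (P::int)" and fin: "finite A"
  shows "(\<And>j. j \<in> A \<Longrightarrow> p_integral P (x j)) \<Longrightarrow>
    \<exists>E. p_integral P E \<and> (\<Prod>j\<in>A. 1 + of_int P * x j) = 1 + of_int P * (\<Sum>j\<in>A. x j) + of_int P ^ 2 * E"
  using fin
proof (induction A rule: finite_induct)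
  case empty then show ?case using pint_zero[OF P] by (intro exI[of _ 0]) simp
next
  case (insert a F)
  have pF: "\<And>j. j \<in> F \<Longrightarrow> p_integral P (x j)" using insert.prems by blast
  obtain E where E: "p_integral P E" "(\<Prod>j\<in>F. 1 + of_int P * x j) = 1 + of_int P * (\<Sum>j\<in>F. x j) + of_int P ^ 2 * E"
    using insert.IH[OF pF] by blast
  define S where "S = (\<Sum>j\<in>F. x j)"
  have xa: "p_integral P (x a)" using insert.prems by blast
  have Sp: "p_integral P S" unfolding S_def by (rule pint_sum[OF P]) (rule pF)
  define E' where "E' = E + x a * S + of_int P * x a * E"
  have "p_integral P E'" unfolding E'_def
    by (intro pint_add[OF P] pint_mult[OF P] E(1) xa Sp pint_int[OF P])
  moreover have "(\<Prod>j\<in>insert a F. 1 + of_int P * x j) = 1 + of_int P * (\<Sum>j\<in>insert a F. x j) + of_int P ^ 2 * E'"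
  proof -
    have "(\<Prod>j\<in>insert a F. 1 + of_int P * x j) = (1 + of_int P * x a) * (\<Prod>j\<in>F. 1 + of_int P * x j)"
      using insert.hyps by simp
    also have "\<dots> = (1 + of_int P * x a) * (1 + of_int P * S + of_int P ^ 2 * E)"
      using E(2) S_def by simp
    also have "\<dots> = 1 + of_int P * (x a + S) + of_int P ^ 2 * E'"
      unfolding E'_def power2_eq_square by (simp add: algebra_simps)
    also have "x a + S = (\<Sum>j\<in>insert a F. x j)" using insert.hyps S_def by simp
    finally show ?thesis .
  qed
  ultimately show ?case by blast
qed

definition ff :: "nat \<Rightarrow> nat \<Rightarrow> nat \<Rightarrow> nat" where "ff p m j = m * j div p"
definition ss :: "nat \<Rightarrow> nat \<Rightarrow> nat \<Rightarrow> nat" where "ss p m j = m * j mod p"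

lemma msf: "m * j = ff p m j * p + ss p m j"
  unfolding ff_def ss_def by simp

lemma ss_bounds:
  assumes "prime p" "\<not> p dvd m" "0 < j" "j < p"
  shows "0 < ss p m j \<and> ss p m j < p"
proof
  have p0: "p > 0" using assms(1) prime_gt_0_nat by blast
  show "ss p m j < p" unfolding ss_def using p0 by simp
  show "0 < ss p m j"
  proof (rule ccontr)
    assume "\<not> 0 < ss p m j"
    then have "p dvd m * j" unfolding ss_def by (simp add: dvd_eq_mod_eq_0)
    then have "p dvd m \<or> p dvd j" using assms(1) prime_dvd_mult_iff by blast
    moreover have "\<not> p dvd j" using assms(3,4) by (meson dvd_imp_le not_le)
    ultimately show False using assms(2) by blast
  qed
qed

lemma ff_bound:
  assumes "prime p" "j < p" "m > 0"
  shows "ff p m j < m"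
proof -
  have p0: "p > 0" using assms(1) prime_gt_0_nat by blast
  have "ff p m j * p \<le> m * j" using msf[of m j p] by linarith
  also have "m * j < m * p" using assms by simp
  finally have "ff p m j * p < m * p" .
  then show ?thesis using mult_less_cancel2 by blast
qed

lemma ndvd_small: "0 < n \<Longrightarrow> n < p \<Longrightarrow> \<not> int p dvd int n"
proof
  assume "0 < n" "n < p" "int p dvd int n"
  then have "p dvd n" by (simp only: int_dvd_int_iff)
  then have "p \<le> n" using \<open>0 < n\<close> by (rule dvd_imp_le)
  then show False using \<open>n < p\<close> by linarith
qed

lemma ss_inj:
  assumes "prime p" "\<not> p dvd m"
  shows "inj_on (ss p m) {1..p-1}"
proof (rule inj_onI)
  fix a b assume a: "a \<in> {1..p-1}" and b: "b \<in> {1..p-1}" and e: "ss p m a = ss p m b"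
  have cop: "coprime m p" using prime_imp_coprime[OF assms] by (simp add: coprime_commute)
  have "[m * a = m * b] (mod p)" using e unfolding ss_def cong_def .
  then have "[a = b] (mod p)" using cong_mult_lcancel_nat[OF cop] by blast
  then have "a mod p = b mod p" unfolding cong_def .
  moreover have "a < p" "b < p" using a b assms(1) prime_gt_0_nat by auto
  ultimately show "a = b" by simp
qed

lemma ss_image:
  assumes "prime p" "\<not> p dvd m"
  shows "ss p m ` {1..p-1} = {1..p-1}"
proof (rule card_subset_eq)
  show "finite {1..p-1}" by simp
  show "ss p m ` {1..p-1} \<subseteq> {1..p-1}"
  proof
    fix y assume "y \<in> ss p m ` {1..p-1}"
    then obtain j where j: "j \<in> {1..p-1}" "y = ss p m j" by blast
    have "0 < j" "j < p" using j(1) assms(1) prime_gt_0_nat by auto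
    then have "0 < ss p m j \<and> ss p m j < p" by (intro ss_bounds[OF assms(1,2)])
    then show "y \<in> {1..p-1}" using j(2) by auto
  qed
  show "card (ss p m ` {1..p-1}) = card {1..p-1}"
    using card_image[OF ss_inj[OF assms]] .
qed

lemma inv_pair:
  assumes pr: "prime p" and m: "m > 0"
    and r: "1 \<le> r" "r \<le> m" and k: "1 \<le> k" "k \<le> p - 1"
    and d: "int m dvd (int k - int r * int p)"
  shows "(r * p - k) div m \<in> {1..p-1} \<and> ff p m ((r * p - k) div m) + 1 = r
         \<and> p - ss p m ((r * p - k) div m) = k"
proof -
  have p0: "p > 0" using pr prime_gt_0_nat by blast
  obtain r' where r': "r = Suc r'" using r(1) by (cases r) auto
  have kp: "k < p" using k p0 by linarith
  have rp: "r * p = r' * p + p" using r' by simp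
  have le: "k \<le> r * p" using rp kp by linarith
  have "int k - int r * int p = - int (r * p - k)" using le by (simp add: of_nat_diff)
  then have "int m dvd int (r * p - k)" using d by simp
  then have "m dvd (r * p - k)" by (simp only: int_dvd_int_iff)
  then have mt: "m * ((r * p - k) div m) = r * p - k" by simp
  define t where "t = (r * p - k) div m"
  have mt': "m * t = r' * p + (p - k)" using mt rp kp unfolding t_def by linarith
  have fdiv: "(r' * p + (p - k)) div p = r'"
  proof (rule div_nat_eqI)
    show "p * r' \<le> r' * p + (p - k)" by simp
    have "p * Suc r' = r' * p + p" by simp
    then show "r' * p + (p - k) < p * Suc r'" using kp k by linarith
  qed
  have fmod: "(r' * p + (p - k)) mod p = p - k"
  proof -
    have "(r' * p + (p - k)) mod p = (r' * p + (p - k)) - (r' * p + (p - k)) div p * p"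
      by (simp only: minus_div_mult_eq_mod)
    also have "\<dots> = (r' * p + (p - k)) - r' * p" by (simp only: fdiv)
    also have "\<dots> = p - k" by simp
    finally show ?thesis .
  qed
  have "ff p m t = r'" unfolding ff_def using mt' fdiv by simp
  moreover have "ss p m t = p - k" unfolding ss_def using mt' fmod by simp
  moreover have "1 \<le> t"
  proof (rule ccontr)
    assume "\<not> 1 \<le> t" then have "t = 0" by simp
    then show False using mt' kp by simp
  qed
  moreover have "t \<le> p - 1"
  proof -
    have "m * t < m * p"
    proof -
      have "m * t < r * p" using mt' rp kp k by linarith
      also have "r * p \<le> m * p" using r(2) by simp
      finally show ?thesis .
    qed
    then have "t < p" using mult_less_cancel1 by blast
    then show ?thesis by linarith
  qed
  ultimately show ?thesis unfolding t_def[symmetric] using r' kp by simp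
qed

lemma fwd_pair:
  assumes pr: "prime p" and m: "m > 0" and nd: "\<not> p dvd m" and j: "j \<in> {1..p-1}"
  shows "1 \<le> ff p m j + 1 \<and> ff p m j + 1 \<le> m \<and> 1 \<le> p - ss p m j \<and> p - ss p m j \<le> p - 1
    \<and> int m dvd (int (p - ss p m j) - int (ff p m j + 1) * int p)
    \<and> ((ff p m j + 1) * p - (p - ss p m j)) div m = j"
proof -
  have p0: "p > 0" using pr prime_gt_0_nat by blast
  have j0: "0 < j" "j < p" using j p0 by auto
  have sb: "0 < ss p m j" "ss p m j < p" using ss_bounds[OF pr nd j0] by auto
  have fb: "ff p m j < m" using ff_bound[OF pr j0(2) m] .
  have e: "m * j = ff p m j * p + ss p m j" by (rule msf)
  have ie: "int m * int j = int (ff p m j) * int p + int (ss p m j)"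
    using arg_cong[OF e, of int] by simp
  have "int (p - ss p m j) - int (ff p m j + 1) * int p = - (int m * int j)"
    using ie sb by (simp add: of_nat_diff algebra_simps)
  then have dv: "int m dvd (int (p - ss p m j) - int (ff p m j + 1) * int p)" by simp
  have "(ff p m j + 1) * p = ff p m j * p + p" by simp
  then have "(ff p m j + 1) * p - (p - ss p m j) = m * j" using e sb by linarith
  then have "((ff p m j + 1) * p - (p - ss p m j)) div m = j" using m by simp
  then show ?thesis using fb sb dv by auto
qed

lemma L_eq:
  assumes pr: "prime p" and m: "m > 0" and nd: "\<not> p dvd m"
  shows "(\<Sum>r=1..m. of_nat r * K p r m) =
    (\<Sum>j\<in>{1..p-1}. of_nat (ff p m j + 1) * (1 / of_nat (p - ss p m j)) :: rat)"
proof -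
  define S where "S r = {k. 1 \<le> k \<and> k \<le> p - 1 \<and> int m dvd (int k - int r * int p)}" for r
  have finS: "finite (S r)" for r
    by (rule finite_subset[of _ "{1..p-1}"]) (auto simp: S_def)
  have A1: "(r*p-k) div m \<in> {1..p-1} \<and> ff p m ((r*p-k) div m) + 1 = r \<and> p - ss p m ((r*p-k) div m) = k"
    if rk: "(r,k) \<in> Sigma {1..m} S" for r k
  proof -
    have "1 \<le> r" "r \<le> m" "1 \<le> k" "k \<le> p-1" "int m dvd (int k - int r * int p)"
      using rk by (auto simp: S_def)
    then show ?thesis by (intro inv_pair[OF pr m])
  qed
  have A2: "(ff p m j + 1, p - ss p m j) \<in> Sigma {1..m} S \<and> ((ff p m j + 1) * p - (p - ss p m j)) div m = j"
    if j: "j \<in> {1..p-1}" for j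
    using fwd_pair[OF pr m nd j] by (auto simp: S_def)
  have "(\<Sum>r=1..m. of_nat r * K p r m) = (\<Sum>r\<in>{1..m}. \<Sum>k\<in>S r. of_nat r * (1 / of_nat k) :: rat)"
    unfolding K_def S_def by (simp only: sum_distrib_left)
  also have "\<dots> = (\<Sum>(r,k)\<in>Sigma {1..m} S. of_nat r * (1 / of_nat k))"
    by (rule sum.Sigma) (auto simp: finS)
  also have "\<dots> = (\<Sum>j\<in>{1..p-1}. of_nat (ff p m j + 1) * (1 / of_nat (p - ss p m j)))"
  proof (rule sum.reindex_bij_witness[where i="\<lambda>j. (ff p m j + 1, p - ss p m j)" and j="\<lambda>(r,k). (r*p - k) div m"])
    fix a assume a: "a \<in> Sigma {1..m} S"
    obtain r k where rk: "a = (r,k)" by (cases a)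
    have h: "(r*p-k) div m \<in> {1..p-1} \<and> ff p m ((r*p-k) div m) + 1 = r \<and> p - ss p m ((r*p-k) div m) = k"
      using A1 a rk by blast
    show "(\<lambda>j. (ff p m j + 1, p - ss p m j)) ((\<lambda>(r,k). (r*p - k) div m) a) = a"
      using h rk by simp
    show "(\<lambda>(r,k). (r*p - k) div m) a \<in> {1..p-1}" using h rk by simp
    show "of_nat (ff p m ((\<lambda>(r,k). (r*p - k) div m) a) + 1) * (1 / of_nat (p - ss p m ((\<lambda>(r,k). (r*p - k) div m) a)))
        = (\<lambda>(r,k). of_nat r * (1 / of_nat k) :: rat) a"
      using h rk by simp
  next
    fix b assume b: "b \<in> {1..p-1}"
    show "(\<lambda>(r,k). (r*p - k) div m) ((\<lambda>j. (ff p m j + 1, p - ss p m j)) b) = b"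
      using A2[OF b] by simp
    show "(\<lambda>j. (ff p m j + 1, p - ss p m j)) b \<in> Sigma {1..m} S"
      using A2[OF b] by simp
  qed
  finally show ?thesis .
qed

lemma prod_eq:
  assumes pr: "prime p" and m: "m > 0" and nd: "\<not> p dvd m"
  shows "(of_nat m ^ (p - 1) :: rat) =
    (\<Prod>j\<in>{1..p-1}. 1 + of_nat p * (of_nat (ff p m j) * (1 / of_nat (ss p m j))))"
proof -
  have p0: "p > 0" using pr prime_gt_0_nat by blast
  have tm: "1 + of_nat p * (of_nat (ff p m j) * (1 / of_nat (ss p m j))) = (of_nat m * of_nat j) / (of_nat (ss p m j) :: rat)"
    if j: "j \<in> {1..p-1}" for j
  proof -
    have j0: "0 < j" "j < p" using j p0 by auto
    have s0: "(of_nat (ss p m j) :: rat) \<noteq> 0" using ss_bounds[OF pr nd j0] by simp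
    have ie: "(of_nat m * of_nat j :: rat) = of_nat (ff p m j) * of_nat p + of_nat (ss p m j)"
      using arg_cong[OF msf[of m j p], of "of_nat :: nat \<Rightarrow> rat"] by simp
    show ?thesis unfolding ie using s0 by (simp add: field_simps)
  qed
  have "(\<Prod>j\<in>{1..p-1}. 1 + of_nat p * (of_nat (ff p m j) * (1 / of_nat (ss p m j))))
      = (\<Prod>j\<in>{1..p-1}. (of_nat m * of_nat j) / (of_nat (ss p m j) :: rat))"
  proof (rule prod.cong)
    fix j assume "j \<in> {1..p-1}"
    then show "1 + of_nat p * (of_nat (ff p m j) * (1 / of_nat (ss p m j))) = (of_nat m * of_nat j) / (of_nat (ss p m j) :: rat)"
      by (rule tm)
  qed simp
  also have "\<dots> = (\<Prod>j\<in>{1..p-1}. of_nat m * of_nat j) / (\<Prod>j\<in>{1..p-1}. of_nat (ss p m j) :: rat)"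
    by (rule prod_dividef)
  also have "(\<Prod>j\<in>{1..p-1}. of_nat (ss p m j) :: rat) = (\<Prod>j\<in>{1..p-1}. of_nat j)"
  proof -
    have "(\<Prod>j\<in>{1..p-1}. of_nat (ss p m j) :: rat) = (\<Prod>j\<in>ss p m ` {1..p-1}. of_nat j)"
      using prod.reindex[OF ss_inj[OF pr nd], of "of_nat :: nat \<Rightarrow> rat"] by (simp add: comp_def)
    then show ?thesis unfolding ss_image[OF pr nd] .
  qed
  also have "(\<Prod>j\<in>{1..p-1}. of_nat m * of_nat j :: rat) = of_nat m ^ (p - 1) * (\<Prod>j\<in>{1..p-1}. of_nat j)"
    by (simp add: prod.distrib)
  also have "(of_nat m ^ (p - 1) * (\<Prod>j\<in>{1..p-1}. of_nat j)) / (\<Prod>j\<in>{1..p-1}. of_nat j) = (of_nat m ^ (p - 1) :: rat)"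
  proof -
    have "(\<Prod>j\<in>{1..p-1}. of_nat j :: rat) \<noteq> 0" by simp
    then show ?thesis by simp
  qed
  finally show ?thesis by simp
qed

lemma harmonic:
  assumes pr: "prime p"
  shows "(\<Sum>k\<in>{1..p-1}. 1 / of_nat k :: rat) =
    of_nat p * ((1/2) * (\<Sum>k\<in>{1..p-1}. (1 / of_nat k) * (1 / of_nat (p - k))))"
proof -
  have p0: "p > 0" using pr prime_gt_0_nat by blast
  define H where "H = (\<Sum>k\<in>{1..p-1}. 1 / of_nat k :: rat)"
  have Hr: "(\<Sum>k\<in>{1..p-1}. 1 / of_nat (p - k) :: rat) = H"
    unfolding H_def
    by (rule sum.reindex_bij_witness[where i="\<lambda>k. p - k" and j="\<lambda>k. p - k"]) auto
  have "2 * H = H + (\<Sum>k\<in>{1..p-1}. 1 / of_nat (p - k) :: rat)" using Hr by simp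
  also have "\<dots> = (\<Sum>k\<in>{1..p-1}. 1 / of_nat k + 1 / of_nat (p - k) :: rat)"
    unfolding H_def by (simp add: sum.distrib)
  also have "\<dots> = (\<Sum>k\<in>{1..p-1}. of_nat p * ((1 / of_nat k) * (1 / of_nat (p - k))) :: rat)"
  proof (rule sum.cong)
    fix k assume k: "k \<in> {1..p-1}"
    have k0: "(of_nat k :: rat) \<noteq> 0" using k by simp
    have kle: "k \<le> p" using k by auto
    have kp: "(of_nat (p - k) :: rat) = of_nat p - of_nat k" using kle by (rule of_nat_diff)
    have kl: "k < p" using k p0 by auto
    have pk0: "(of_nat p - of_nat k :: rat) \<noteq> 0" using kl by simp
    show "1 / of_nat k + 1 / of_nat (p - k) = (of_nat p * ((1 / of_nat k) * (1 / of_nat (p - k))) :: rat)"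
      unfolding kp using k0 pk0 by (simp add: field_simps)
  qed simp
  also have "\<dots> = of_nat p * (\<Sum>k\<in>{1..p-1}. (1 / of_nat k) * (1 / of_nat (p - k)))"
    by (simp add: sum_distrib_left)
  finally have "2 * H = of_nat p * (\<Sum>k\<in>{1..p-1}. (1 / of_nat k) * (1 / of_nat (p - k)) :: rat)" .
  then show ?thesis unfolding H_def[symmetric] by simp
qed

theorem corollary2p2:
  fixes p m :: nat
  assumes "prime p" and "odd p" and "m > 0" and "\<not> p dvd m"
  shows "rat_cong (\<Sum>r=1..m. of_nat r * K p r m) (- fermat_quotient p m) (int p)"
proof -
  have pr: "prime p" and m: "m > 0" and nd: "\<not> p dvd m" using assms by auto
  have P: "prime (int p)" using pr by simp
  have p0: "p > 0" using pr prime_gt_0_nat by blast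
  have p2: "2 < p"
  proof -
    have "2 \<le> p" using pr prime_ge_2_nat by blast
    moreover have "p \<noteq> 2" using assms(2) by auto
    ultimately show ?thesis by linarith
  qed
  have Pp: "(of_int (int p) :: rat) = of_nat p" by simp
  define x where "x j = (of_nat (ff p m j) * (1 / of_nat (ss p m j)) :: rat)" for j
  define g where "g j = (of_nat (ff p m j + 1) * (1 / of_nat (p - ss p m j)) :: rat)" for j
  define w where "w j = (of_nat (ff p m j + 1) * (1 / of_nat (p - ss p m j)) * (1 / of_nat (ss p m j)) :: rat)" for j
  define T where "T = (\<Sum>k\<in>{1..p-1}. (1 / of_nat k) * (1 / of_nat (p - k)) :: rat)"
  have bnds: "0 < ss p m j \<and> ss p m j < p" if j: "j \<in> {1..p-1}" for j
  proof -
    have "0 < j" "j < p" using j p0 by auto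
    then show ?thesis by (intro ss_bounds[OF pr nd])
  qed
  have inv_s: "p_integral (int p) (1 / of_nat (ss p m j))" if j: "j \<in> {1..p-1}" for j
    using bnds[OF j] by (intro pint_inv_nat[OF P] ndvd_small) auto
  have inv_ps: "p_integral (int p) (1 / of_nat (p - ss p m j))" if j: "j \<in> {1..p-1}" for j
    using bnds[OF j] by (intro pint_inv_nat[OF P] ndvd_small) auto
  have xint: "p_integral (int p) (x j)" if j: "j \<in> {1..p-1}" for j
    unfolding x_def by (intro pint_mult[OF P] pint_nat[OF P] inv_s j)
  have gint: "p_integral (int p) (g j)" if j: "j \<in> {1..p-1}" for j
    unfolding g_def by (intro pint_mult[OF P] pint_nat[OF P] inv_ps j)
  have wint: "p_integral (int p) (w j)" if j: "j \<in> {1..p-1}" for j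
    unfolding w_def by (intro pint_mult[OF P] pint_nat[OF P] inv_ps inv_s j)
  have Tint: "p_integral (int p) T"
    unfolding T_def
  proof (rule pint_sum[OF P])
    fix k assume k: "k \<in> {1..p-1}"
    have "0 < k" "k < p" "0 < p - k" "p - k < p" using k p0 by auto
    then show "p_integral (int p) (1 / of_nat k * (1 / of_nat (p - k)))"
      by (intro pint_mult[OF P] pint_inv_nat[OF P] ndvd_small)
  qed
  have halfint: "p_integral (int p) (1 / of_nat 2)"
    using p2 by (intro pint_inv_nat[OF P] ndvd_small) auto
  have "\<exists>E. p_integral (int p) E \<and>
    (\<Prod>j\<in>{1..p-1}. 1 + of_int (int p) * x j) = 1 + of_int (int p) * (\<Sum>j\<in>{1..p-1}. x j) + of_int (int p) ^ 2 * E"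
    by (rule prod_expand[OF P finite_atLeastAtMost]) (rule xint)
  then obtain E where E: "p_integral (int p) E"
    "(\<Prod>j\<in>{1..p-1}. 1 + of_int (int p) * x j) = 1 + of_int (int p) * (\<Sum>j\<in>{1..p-1}. x j) + of_int (int p) ^ 2 * E"
    by blast
  have pe: "(of_nat m ^ (p - 1) :: rat) = (\<Prod>j\<in>{1..p-1}. 1 + of_nat p * x j)"
    unfolding x_def by (rule prod_eq[OF pr m nd])
  have fq: "fermat_quotient p m = (\<Sum>j\<in>{1..p-1}. x j) + of_nat p * E"
  proof -
    have "(of_nat m ^ (p - 1) :: rat) - 1 = of_nat p * ((\<Sum>j\<in>{1..p-1}. x j) + of_nat p * E)"
      using pe E(2) unfolding Pp by (simp add: algebra_simps power2_eq_square)
    moreover have "(of_nat p :: rat) \<noteq> 0" using p0 by simp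
    ultimately show ?thesis unfolding fermat_quotient_def by simp
  qed
  have L: "(\<Sum>r=1..m. of_nat r * K p r m) = (\<Sum>j\<in>{1..p-1}. g j)"
    unfolding g_def by (rule L_eq[OF pr m nd])
  have Hs: "(\<Sum>j\<in>{1..p-1}. 1 / of_nat (ss p m j) :: rat) = (\<Sum>k\<in>{1..p-1}. 1 / of_nat k)"
  proof -
    have "(\<Sum>k\<in>{1..p-1}. 1 / of_nat k :: rat) = (\<Sum>j\<in>{1..p-1}. 1 / of_nat (ss p m j))"
      by (rule sum.reindex_cong[OF ss_inj[OF pr nd] ss_image[OF pr nd, symmetric]]) (rule refl)
    then show ?thesis by (rule sym)
  qed
  have H: "(\<Sum>k\<in>{1..p-1}. 1 / of_nat k :: rat) = of_nat p * ((1/2) * T)"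
    unfolding T_def by (rule harmonic[OF pr])
  have per: "g j + x j = of_nat p * w j - 1 / of_nat (ss p m j)" if j: "j \<in> {1..p-1}" for j
  proof -
    have b: "0 < ss p m j" "ss p m j < p" using bnds[OF j] by auto
    have e: "(of_nat (p - ss p m j) :: rat) = of_nat p - of_nat (ss p m j)"
      using b by (intro of_nat_diff) simp
    have n1: "(of_nat (ss p m j) :: rat) \<noteq> 0" using b by simp
    have n2: "(of_nat p - of_nat (ss p m j) :: rat) \<noteq> 0" using b by simp
    show ?thesis unfolding g_def x_def w_def e using n1 n2 by (simp add: field_simps)
  qed
  define u where "u = (\<Sum>j\<in>{1..p-1}. w j) - (1 / of_nat 2) * T + E"
  have key: "(\<Sum>j\<in>{1..p-1}. g j) + fermat_quotient p m = of_nat p * u"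
  proof -
    have "(\<Sum>j\<in>{1..p-1}. g j) + fermat_quotient p m
        = (\<Sum>j\<in>{1..p-1}. g j + x j) + of_nat p * E"
      unfolding fq by (simp add: sum.distrib)
    also have "(\<Sum>j\<in>{1..p-1}. g j + x j) = (\<Sum>j\<in>{1..p-1}. of_nat p * w j - 1 / of_nat (ss p m j))"
      by (rule sum.cong) (simp_all only: per)
    also have "\<dots> = of_nat p * (\<Sum>j\<in>{1..p-1}. w j) - (\<Sum>j\<in>{1..p-1}. 1 / of_nat (ss p m j))"
      by (simp only: sum_subtractf sum_distrib_left)
    also have "\<dots> = of_nat p * (\<Sum>j\<in>{1..p-1}. w j) - (\<Sum>k\<in>{1..p-1}. 1 / of_nat k)"
      by (simp only: Hs)
    also have "\<dots> = of_nat p * (\<Sum>j\<in>{1..p-1}. w j) - of_nat p * ((1/2) * T)"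
      unfolding H ..
    finally show ?thesis unfolding u_def by (simp add: algebra_simps)
  qed
  have Lint: "p_integral (int p) (\<Sum>r=1..m. of_nat r * K p r m)"
    unfolding L by (rule pint_sum[OF P]) (rule gint)
  have fqint: "p_integral (int p) (- fermat_quotient p m)"
    unfolding fq
    by (intro pint_neg[OF P] pint_add[OF P] pint_mult[OF P] pint_nat[OF P] E(1) pint_sum[OF P] xint)
  have uint: "p_integral (int p) u"
    unfolding u_def
    by (intro pint_add[OF P] pint_diff[OF P] pint_mult[OF P] halfint Tint E(1) pint_sum[OF P] wint)
  have "(\<Sum>r=1..m. of_nat r * K p r m) - - fermat_quotient p m = of_int (int p) * u"
    unfolding Pp L using key by simp
  then show ?thesis unfolding rat_cong_def using Lint fqint uint by blast
qed

end
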